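(* Let $\mathcal{C}$ be a Karoubian triangulated category endowed with a weight structure $w$, let $M\in\mathrm{Obj}\,\mathcal{C}$ and $m\in\mathbb{Z}$. Fix an $m$-weight decomposition $w_{\le m}M\xrightarrow{c} M\to w_{\ge m+1}M\to (w_{\le m}M)[1]$ of $M$, and suppose that there is a morphism of this distinguished triangle to itself of the form $(h,\mathrm{id}_M,j)$ (i.e., $h\in\mathcal{C}(w_{\le m}M,w_{\le m}M)$, $j\in \mathcal{C}(w_{\ge m+1}M,w_{\ge m+1}M)$, the squares commute) such that $h$ is idempotent. Let $w_{\le m}M\cong M_1\bigoplus M_0$ be the decomposition corresponding to $h$ (so that $h$ is the projection of $w_{\le m}M$ onto the summand $M_1$). Then $M_0\in\mathcal{C}_{w=m}$, and the triangle $w_{\le m}M\to M\to w_{\ge m+1}M\to (w_{\le m}M)[1]$ is isomorphic to the direct sum of a certain $m$-weight decomposition $M_1\to M\to M_2\to M_1[1]$ of $M$ and of the distinguished triangle $M_0\to 0\to M_0[1]\xrightarrow{\mathrm{id}} M_0[1]$.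
   Context: A weight structure $w$ on a triangulated category $\mathcal{C}$ (homological convention) is a pair of classes of objects $\mathcal{C}_{w\le 0},\mathcal{C}_{w\ge 0}$ such that: (i) both are closed under retracts in $\mathcal{C}$; (ii) $\mathcal{C}_{w\le 0}\subset\mathcal{C}_{w\le 0}[1]$ and $\mathcal{C}_{w\ge 0}[1]\subset \mathcal{C}_{w\ge 0}$; (iii) $\mathcal{C}(X,Y)=0$ for all $X\in\mathcal{C}_{w\le 0}$, $Y\in\mathcal{C}_{w\ge 0}[1]$; (iv) every object $M$ fits into a distinguished triangle $X\to M\to Y\to X[1]$ with $X\in\mathcal{C}_{w\le 0}$, $Y\in\mathcal{C}_{w\ge 0}[1]$. For $i\in\mathbb{Z}$ put $\mathcal{C}_{w\le i}=\mathcal{C}_{w\le 0}[i]$, $\mathcal{C}_{w\ge i}=\mathcal{C}_{w\ge 0}[i]$, $\mathcal{C}_{w=i}=\mathcal{C}_{w\le i}\cap\mathcal{C}_{w\ge i}$. An $m$-weight decomposition of $M$ is a distinguished triangle $w_{\le m}M\to M\to w_{\ge m+1}M\to (w_{\le m}M)[1]$ with $w_{\le m}M\in \mathcal{C}_{w\le m}$ and $w_{\ge m+1}M\in\mathcal{C}_{w\ge m+1}$ (these exist for every $M$ and $m$ but are not unique). A category is Karoubian if every idempotent endomorphism splits. *)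

theory Defs
  imports Main
begin

text \<open>Hom X Y is the set of
morphisms X -> Y; cmp g f is the composite "g after f".\<close>

record ('o, 'm) tricat =
  Obj  :: "'o set"
  Hom  :: "'o \<Rightarrow> 'o \<Rightarrow> 'm set"
  cmp  :: "'m \<Rightarrow> 'm \<Rightarrow> 'm"
  idm  :: "'o \<Rightarrow> 'm"
  add  :: "'m \<Rightarrow> 'm \<Rightarrow> 'm"
  neg  :: "'m \<Rightarrow> 'm"
  zer  :: "'o \<Rightarrow> 'o \<Rightarrow> 'm"
  shO  :: "'o \<Rightarrow> 'o"
  shM  :: "'m \<Rightarrow> 'm"
  dist :: "('o \<times> 'o \<times> 'o \<times> 'm \<times> 'm \<times> 'm) set"

definition category :: "('o, 'm, 'x) tricat_scheme \<Rightarrow> bool" where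
  "category C \<equiv>
     (\<forall>X Y f. f \<in> Hom C X Y \<longrightarrow> X \<in> Obj C \<and> Y \<in> Obj C) \<and>
     (\<forall>X \<in> Obj C. idm C X \<in> Hom C X X) \<and>
     (\<forall>X Y Z f g. f \<in> Hom C X Y \<longrightarrow> g \<in> Hom C Y Z \<longrightarrow> cmp C g f \<in> Hom C X Z) \<and>
     (\<forall>X Y f. f \<in> Hom C X Y \<longrightarrow> cmp C (idm C Y) f = f \<and> cmp C f (idm C X) = f) \<and>
     (\<forall>W X Y Z f g h. f \<in> Hom C W X \<longrightarrow> g \<in> Hom C X Y \<longrightarrow> h \<in> Hom C Y Z \<longrightarrow>
         cmp C h (cmp C g f) = cmp C (cmp C h g) f)"

definition preadditive :: "('o, 'm, 'x) tricat_scheme \<Rightarrow> bool" where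
  "preadditive C \<equiv>
     (\<forall>X \<in> Obj C. \<forall>Y \<in> Obj C.
        zer C X Y \<in> Hom C X Y \<and>
        (\<forall>f \<in> Hom C X Y. \<forall>g \<in> Hom C X Y. add C f g \<in> Hom C X Y) \<and>
        (\<forall>f \<in> Hom C X Y. neg C f \<in> Hom C X Y) \<and>
        (\<forall>f \<in> Hom C X Y. \<forall>g \<in> Hom C X Y. \<forall>h \<in> Hom C X Y.
            add C (add C f g) h = add C f (add C g h)) \<and>
        (\<forall>f \<in> Hom C X Y. \<forall>g \<in> Hom C X Y. add C f g = add C g f) \<and>
        (\<forall>f \<in> Hom C X Y. add C (zer C X Y) f = f) \<and>
        (\<forall>f \<in> Hom C X Y. add C (neg C f) f = zer C X Y)) \<and>
     (\<forall>X Y Z f g g'. f \<in> Hom C X Y \<longrightarrow> g \<in> Hom C Y Z \<longrightarrow> g' \<in> Hom C Y Z \<longrightarrow>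
         cmp C (add C g g') f = add C (cmp C g f) (cmp C g' f)) \<and>
     (\<forall>X Y Z f f' g. f \<in> Hom C X Y \<longrightarrow> f' \<in> Hom C X Y \<longrightarrow> g \<in> Hom C Y Z \<longrightarrow>
         cmp C g (add C f f') = add C (cmp C g f) (cmp C g f'))"

definition is_zero_obj :: "('o, 'm, 'x) tricat_scheme \<Rightarrow> 'o \<Rightarrow> bool" where
  "is_zero_obj C Z \<equiv> Z \<in> Obj C \<and>
     (\<forall>X \<in> Obj C. (\<forall>f \<in> Hom C Z X. f = zer C Z X) \<and> (\<forall>f \<in> Hom C X Z. f = zer C X Z))"

definition biproduct :: "('o, 'm, 'x) tricat_scheme \<Rightarrow> 'o \<Rightarrow> 'o \<Rightarrow> 'o \<Rightarrow>
    'm \<Rightarrow> 'm \<Rightarrow> 'm \<Rightarrow> 'm \<Rightarrow> bool" where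
  "biproduct C S X Y i1 p1 i2 p2 \<equiv>
     S \<in> Obj C \<and> X \<in> Obj C \<and> Y \<in> Obj C \<and>
     i1 \<in> Hom C X S \<and> p1 \<in> Hom C S X \<and> i2 \<in> Hom C Y S \<and> p2 \<in> Hom C S Y \<and>
     cmp C p1 i1 = idm C X \<and> cmp C p2 i2 = idm C Y \<and>
     cmp C p2 i1 = zer C X Y \<and> cmp C p1 i2 = zer C Y X \<and>
     add C (cmp C i1 p1) (cmp C i2 p2) = idm C S"

definition additive :: "('o, 'm, 'x) tricat_scheme \<Rightarrow> bool" where
  "additive C \<equiv> category C \<and> preadditive C \<and> (\<exists>Z. is_zero_obj C Z) \<and>
     (\<forall>X \<in> Obj C. \<forall>Y \<in> Obj C. \<exists>S i1 p1 i2 p2. biproduct C S X Y i1 p1 i2 p2)"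

definition iso :: "('o, 'm, 'x) tricat_scheme \<Rightarrow> 'o \<Rightarrow> 'o \<Rightarrow> 'm \<Rightarrow> bool" where
  "iso C X Y f \<equiv> f \<in> Hom C X Y \<and>
     (\<exists>g \<in> Hom C Y X. cmp C g f = idm C X \<and> cmp C f g = idm C Y)"

definition isomorphic :: "('o, 'm, 'x) tricat_scheme \<Rightarrow> 'o \<Rightarrow> 'o \<Rightarrow> bool" where
  "isomorphic C X Y \<equiv> (\<exists>f. iso C X Y f)"

definition shift_autoequivalence :: "('o, 'm, 'x) tricat_scheme \<Rightarrow> bool" where
  "shift_autoequivalence C \<equiv>
     (\<forall>X \<in> Obj C. shO C X \<in> Obj C) \<and>
     (\<forall>X Y f. f \<in> Hom C X Y \<longrightarrow> shM C f \<in> Hom C (shO C X) (shO C Y)) \<and>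
     (\<forall>X \<in> Obj C. shM C (idm C X) = idm C (shO C X)) \<and>
     (\<forall>X Y Z f g. f \<in> Hom C X Y \<longrightarrow> g \<in> Hom C Y Z \<longrightarrow>
         shM C (cmp C g f) = cmp C (shM C g) (shM C f)) \<and>
     (\<forall>X Y f f'. f \<in> Hom C X Y \<longrightarrow> f' \<in> Hom C X Y \<longrightarrow>
         shM C (add C f f') = add C (shM C f) (shM C f')) \<and>
     (\<forall>X \<in> Obj C. \<forall>Y \<in> Obj C. bij_betw (shM C) (Hom C X Y) (Hom C (shO C X) (shO C Y))) \<and>
     (\<forall>Y \<in> Obj C. \<exists>X \<in> Obj C. isomorphic C (shO C X) Y)"

type_synonym ('o, 'm) triangle = "'o \<times> 'o \<times> 'o \<times> 'm \<times> 'm \<times> 'm"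

definition is_triangle :: "('o, 'm, 'x) tricat_scheme \<Rightarrow> ('o, 'm) triangle \<Rightarrow> bool" where
  "is_triangle C T \<equiv> (case T of (X, Y, Z, f, g, h) \<Rightarrow>
     f \<in> Hom C X Y \<and> g \<in> Hom C Y Z \<and> h \<in> Hom C Z (shO C X))"

definition tri_morph :: "('o, 'm, 'x) tricat_scheme \<Rightarrow> ('o, 'm) triangle \<Rightarrow> ('o, 'm) triangle \<Rightarrow>
    'm \<Rightarrow> 'm \<Rightarrow> 'm \<Rightarrow> bool" where
  "tri_morph C T T' a b c \<equiv> (case T of (X, Y, Z, f, g, h) \<Rightarrow> case T' of (X', Y', Z', f', g', h') \<Rightarrow>
     a \<in> Hom C X X' \<and> b \<in> Hom C Y Y' \<and> c \<in> Hom C Z Z' \<and>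
     cmp C b f = cmp C f' a \<and> cmp C c g = cmp C g' b \<and> cmp C (shM C a) h = cmp C h' c)"

definition tri_iso :: "('o, 'm, 'x) tricat_scheme \<Rightarrow> ('o, 'm) triangle \<Rightarrow> ('o, 'm) triangle \<Rightarrow>
    'm \<Rightarrow> 'm \<Rightarrow> 'm \<Rightarrow> bool" where
  "tri_iso C T T' a b c \<equiv> tri_morph C T T' a b c \<and> (case T of (X, Y, Z, f, g, h) \<Rightarrow>
     case T' of (X', Y', Z', f', g', h') \<Rightarrow> iso C X X' a \<and> iso C Y Y' b \<and> iso C Z Z' c)"

definition triangulated :: "('o, 'm, 'x) tricat_scheme \<Rightarrow> bool" where
  "triangulated C \<equiv> additive C \<and> shift_autoequivalence C \<and>
     (\<forall>T \<in> dist C. is_triangle C T) \<and>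
     \<comment> \<open>TR1: closure under isomorphism, identity triangles, existence of cones\<close>
     (\<forall>T T' a b c. T \<in> dist C \<longrightarrow> is_triangle C T' \<longrightarrow> tri_iso C T T' a b c \<longrightarrow> T' \<in> dist C) \<and>
     (\<forall>X \<in> Obj C. \<forall>Z. is_zero_obj C Z \<longrightarrow>
        (X, X, Z, idm C X, zer C X Z, zer C Z (shO C X)) \<in> dist C) \<and>
     (\<forall>X Y f. f \<in> Hom C X Y \<longrightarrow> (\<exists>Z g h. (X, Y, Z, f, g, h) \<in> dist C)) \<and>
     \<comment> \<open>TR2: rotation\<close>
     (\<forall>X Y Z f g h. f \<in> Hom C X Y \<longrightarrow>
        ((X, Y, Z, f, g, h) \<in> dist C \<longleftrightarrow> (Y, Z, shO C X, g, h, neg C (shM C f)) \<in> dist C)) \<and>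
     \<comment> \<open>TR3: completion of morphisms of triangles\<close>
     (\<forall>X Y Z f g h X' Y' Z' f' g' h' a b.
        (X, Y, Z, f, g, h) \<in> dist C \<longrightarrow> (X', Y', Z', f', g', h') \<in> dist C \<longrightarrow>
        a \<in> Hom C X X' \<longrightarrow> b \<in> Hom C Y Y' \<longrightarrow> cmp C b f = cmp C f' a \<longrightarrow>
        (\<exists>c \<in> Hom C Z Z'. cmp C c g = cmp C g' b \<and> cmp C (shM C a) h = cmp C h' c)) \<and>
     \<comment> \<open>TR4: octahedral axiom\<close>
     (\<forall>X Y Z u v Z' x x' X' y y' Y' z z'.
        (X, Y, Z', u, x, x') \<in> dist C \<longrightarrow>
        (Y, Z, X', v, y, y') \<in> dist C \<longrightarrow>
        (X, Z, Y', cmp C v u, z, z') \<in> dist C \<longrightarrow>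
        (\<exists>a b. (Z', Y', X', a, b, cmp C (shM C x) y') \<in> dist C \<and>
           cmp C a x = cmp C z v \<and> cmp C z' a = x' \<and>
           cmp C b z = y \<and> cmp C y' b = cmp C (shM C u) z'))"

definition karoubian :: "('o, 'm, 'x) tricat_scheme \<Rightarrow> bool" where
  "karoubian C \<equiv> (\<forall>X \<in> Obj C. \<forall>e \<in> Hom C X X. cmp C e e = e \<longrightarrow>
     (\<exists>Y r s. r \<in> Hom C X Y \<and> s \<in> Hom C Y X \<and> cmp C r s = idm C Y \<and> cmp C s r = e))"

definition retract :: "('o, 'm, 'x) tricat_scheme \<Rightarrow> 'o \<Rightarrow> 'o \<Rightarrow> bool" where
  "retract C Y X \<equiv> (\<exists>s \<in> Hom C Y X. \<exists>r \<in> Hom C X Y. cmp C r s = idm C Y)"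

text \<open>S[i] for an integer i: objects X with X \<cong> Y[i] for some Y in S, expressed
via nonnegative powers of the shift (X[k] \<cong> Y[l] with l - k = i), since [1] is
only an autoequivalence.\<close>
definition wshift :: "('o, 'm, 'x) tricat_scheme \<Rightarrow> 'o set \<Rightarrow> int \<Rightarrow> 'o set" where
  "wshift C S i = {X \<in> Obj C. \<exists>Y \<in> S. \<exists>k l :: nat. int l - int k = i \<and>
      isomorphic C ((shO C ^^ k) X) ((shO C ^^ l) Y)}"

text \<open>Weight structure (homological convention); Le = C_{w<=0}, Ge = C_{w>=0}.\<close>
definition weight_structure :: "('o, 'm, 'x) tricat_scheme \<Rightarrow> 'o set \<Rightarrow> 'o set \<Rightarrow> bool" where
  "weight_structure C Le Ge \<equiv> Le \<subseteq> Obj C \<and> Ge \<subseteq> Obj C \<and>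
     (\<forall>X \<in> Le. \<forall>Y \<in> Obj C. retract C Y X \<longrightarrow> Y \<in> Le) \<and>
     (\<forall>X \<in> Ge. \<forall>Y \<in> Obj C. retract C Y X \<longrightarrow> Y \<in> Ge) \<and>
     Le \<subseteq> wshift C Le 1 \<and> wshift C Ge 1 \<subseteq> Ge \<and>
     (\<forall>X \<in> Le. \<forall>Y \<in> wshift C Ge 1. \<forall>f \<in> Hom C X Y. f = zer C X Y) \<and>
     (\<forall>M \<in> Obj C. \<exists>X Y f g h. (X, M, Y, f, g, h) \<in> dist C \<and> X \<in> Le \<and> Y \<in> wshift C Ge 1)"

definition w_le :: "('o, 'm, 'x) tricat_scheme \<Rightarrow> 'o set \<Rightarrow> int \<Rightarrow> 'o set" where
  "w_le C Le i = wshift C Le i"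

definition w_ge :: "('o, 'm, 'x) tricat_scheme \<Rightarrow> 'o set \<Rightarrow> int \<Rightarrow> 'o set" where
  "w_ge C Ge i = wshift C Ge i"

definition w_eq :: "('o, 'm, 'x) tricat_scheme \<Rightarrow> 'o set \<Rightarrow> 'o set \<Rightarrow> int \<Rightarrow> 'o set" where
  "w_eq C Le Ge i = w_le C Le i \<inter> w_ge C Ge i"

end

theory Submission
  imports Defs
begin


locale TC =
  fixes C :: "('o, 'm) tricat"
  assumes tri: "triangulated C"
begin

lemma additive: "additive C" using tri unfolding triangulated_def by blast
lemma cat: "category C" using additive unfolding additive_def by blast
lemma pre: "preadditive C" using additive unfolding additive_def by blast
lemma shaut: "shift_autoequivalence C" using tri unfolding triangulated_def by blast

lemma hom_obj: "f \<in> Hom C X Y \<Longrightarrow> X \<in> Obj C \<and> Y \<in> Obj C"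
  using cat unfolding category_def by blast
lemma hom_objL: "f \<in> Hom C X Y \<Longrightarrow> X \<in> Obj C" using hom_obj by blast
lemma hom_objR: "f \<in> Hom C X Y \<Longrightarrow> Y \<in> Obj C" using hom_obj by blast
lemma id_hom: "X \<in> Obj C \<Longrightarrow> idm C X \<in> Hom C X X"
  using cat unfolding category_def by blast
lemma cmp_hom: "f \<in> Hom C X Y \<Longrightarrow> g \<in> Hom C Y Z \<Longrightarrow> cmp C g f \<in> Hom C X Z"
  using cat unfolding category_def by blast
lemma id_left: "f \<in> Hom C X Y \<Longrightarrow> cmp C (idm C Y) f = f"
  using cat unfolding category_def by blast
lemma id_right: "f \<in> Hom C X Y \<Longrightarrow> cmp C f (idm C X) = f"
  using cat unfolding category_def by blast
lemma assoc: "f \<in> Hom C W X \<Longrightarrow> g \<in> Hom C X Y \<Longrightarrow> h \<in> Hom C Y Z \<Longrightarrow>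
         cmp C h (cmp C g f) = cmp C (cmp C h g) f"
  using cat unfolding category_def by blast

lemma pre_all: "(\<forall>X \<in> Obj C. \<forall>Y \<in> Obj C.
        zer C X Y \<in> Hom C X Y \<and>
        (\<forall>f \<in> Hom C X Y. \<forall>g \<in> Hom C X Y. add C f g \<in> Hom C X Y) \<and>
        (\<forall>f \<in> Hom C X Y. neg C f \<in> Hom C X Y) \<and>
        (\<forall>f \<in> Hom C X Y. \<forall>g \<in> Hom C X Y. \<forall>h \<in> Hom C X Y.
            add C (add C f g) h = add C f (add C g h)) \<and>
        (\<forall>f \<in> Hom C X Y. \<forall>g \<in> Hom C X Y. add C f g = add C g f) \<and>
        (\<forall>f \<in> Hom C X Y. add C (zer C X Y) f = f) \<and>
        (\<forall>f \<in> Hom C X Y. add C (neg C f) f = zer C X Y))"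
  using pre unfolding preadditive_def by (elim conjE)

lemma pre_XY: assumes "X \<in> Obj C" "Y \<in> Obj C" shows
        "zer C X Y \<in> Hom C X Y \<and>
        (\<forall>f \<in> Hom C X Y. \<forall>g \<in> Hom C X Y. add C f g \<in> Hom C X Y) \<and>
        (\<forall>f \<in> Hom C X Y. neg C f \<in> Hom C X Y) \<and>
        (\<forall>f \<in> Hom C X Y. \<forall>g \<in> Hom C X Y. \<forall>h \<in> Hom C X Y.
            add C (add C f g) h = add C f (add C g h)) \<and>
        (\<forall>f \<in> Hom C X Y. \<forall>g \<in> Hom C X Y. add C f g = add C g f) \<and>
        (\<forall>f \<in> Hom C X Y. add C (zer C X Y) f = f) \<and>
        (\<forall>f \<in> Hom C X Y. add C (neg C f) f = zer C X Y)"
  using pre_all assms by (elim ballE) auto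

lemma zer_hom: "X \<in> Obj C \<Longrightarrow> Y \<in> Obj C \<Longrightarrow> zer C X Y \<in> Hom C X Y"
  using pre_XY by blast
lemma add_hom: "f \<in> Hom C X Y \<Longrightarrow> g \<in> Hom C X Y \<Longrightarrow> add C f g \<in> Hom C X Y"
  using pre_XY[OF hom_objL hom_objR] by blast
lemma neg_hom: "f \<in> Hom C X Y \<Longrightarrow> neg C f \<in> Hom C X Y"
  using pre_XY[OF hom_objL hom_objR] by blast
lemma add_assoc: "f \<in> Hom C X Y \<Longrightarrow> g \<in> Hom C X Y \<Longrightarrow> h \<in> Hom C X Y \<Longrightarrow>
   add C (add C f g) h = add C f (add C g h)"
  using pre_XY[OF hom_objL hom_objR] by blast
lemma add_comm: "f \<in> Hom C X Y \<Longrightarrow> g \<in> Hom C X Y \<Longrightarrow> add C f g = add C g f"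
  using pre_XY[OF hom_objL hom_objR] by blast
lemma add_zl: "f \<in> Hom C X Y \<Longrightarrow> add C (zer C X Y) f = f"
  using pre_XY[OF hom_objL hom_objR] by blast
lemma add_negl: "f \<in> Hom C X Y \<Longrightarrow> add C (neg C f) f = zer C X Y"
  using pre_XY[OF hom_objL hom_objR] by blast
lemma distr: "f \<in> Hom C X Y \<Longrightarrow> g \<in> Hom C Y Z \<Longrightarrow> g' \<in> Hom C Y Z \<Longrightarrow>
         cmp C (add C g g') f = add C (cmp C g f) (cmp C g' f)"
proof -
  have "\<forall>X Y Z f g g'. f \<in> Hom C X Y \<longrightarrow> g \<in> Hom C Y Z \<longrightarrow> g' \<in> Hom C Y Z \<longrightarrow>
         cmp C (add C g g') f = add C (cmp C g f) (cmp C g' f)"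
    using pre unfolding preadditive_def by (elim conjE)
  thus "f \<in> Hom C X Y \<Longrightarrow> g \<in> Hom C Y Z \<Longrightarrow> g' \<in> Hom C Y Z \<Longrightarrow>
         cmp C (add C g g') f = add C (cmp C g f) (cmp C g' f)" by blast
qed
lemma distl: "f \<in> Hom C X Y \<Longrightarrow> f' \<in> Hom C X Y \<Longrightarrow> g \<in> Hom C Y Z \<Longrightarrow>
         cmp C g (add C f f') = add C (cmp C g f) (cmp C g f')"
proof -
  have "\<forall>X Y Z f f' g. f \<in> Hom C X Y \<longrightarrow> f' \<in> Hom C X Y \<longrightarrow> g \<in> Hom C Y Z \<longrightarrow>
         cmp C g (add C f f') = add C (cmp C g f) (cmp C g f')"
    using pre unfolding preadditive_def by (elim conjE)
  thus "f \<in> Hom C X Y \<Longrightarrow> f' \<in> Hom C X Y \<Longrightarrow> g \<in> Hom C Y Z \<Longrightarrow>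
         cmp C g (add C f f') = add C (cmp C g f) (cmp C g f')" by blast
qed

lemma add_zr: assumes "f \<in> Hom C X Y" shows "add C f (zer C X Y) = f"
  using add_comm[OF assms zer_hom[OF hom_objL[OF assms] hom_objR[OF assms]]] add_zl[OF assms] by simp
lemma add_negr: assumes "f \<in> Hom C X Y" shows "add C f (neg C f) = zer C X Y"
  using add_comm[OF assms neg_hom[OF assms]] add_negl[OF assms] by simp

lemma neg_unique: assumes "a \<in> Hom C X Y" "b \<in> Hom C X Y" "add C a b = zer C X Y"
  shows "a = neg C b"
proof -
  have "a = add C a (add C b (neg C b))" using assms by (simp add: add_negr add_zr)
  also have "\<dots> = add C (add C a b) (neg C b)" using add_assoc[OF assms(1,2) neg_hom[OF assms(2)]] by simp
  also have "\<dots> = neg C b" using assms by (simp add: add_zl neg_hom)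
  finally show ?thesis .
qed

lemma idem_zero: assumes "x \<in> Hom C X Y" "add C x x = x" shows "x = zer C X Y"
proof -
  have "zer C X Y = add C x (neg C x)" using assms by (simp add: add_negr)
  also have "\<dots> = add C (add C x x) (neg C x)" using assms by simp
  also have "\<dots> = add C x (add C x (neg C x))" using add_assoc[OF assms(1,1) neg_hom[OF assms(1)]] by simp
  also have "\<dots> = x" using assms by (simp add: add_negr add_zr)
  finally show ?thesis by simp
qed

lemma zz: "X \<in> Obj C \<Longrightarrow> Y \<in> Obj C \<Longrightarrow> add C (zer C X Y) (zer C X Y) = zer C X Y"
  by (simp add: add_zl zer_hom)

lemma cmp_zl: assumes "f \<in> Hom C X Y" "Z \<in> Obj C" shows "cmp C (zer C Y Z) f = zer C X Z"
proof -
  have Y: "Y \<in> Obj C" using assms hom_obj by blast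
  have h: "cmp C (zer C Y Z) f \<in> Hom C X Z" using assms Y by (simp add: cmp_hom zer_hom)
  have "add C (cmp C (zer C Y Z) f) (cmp C (zer C Y Z) f) = cmp C (zer C Y Z) f"
    using distr[OF assms(1) zer_hom[OF Y assms(2)] zer_hom[OF Y assms(2)]] zz[OF Y assms(2)] by simp
  thus ?thesis using idem_zero[OF h] by simp
qed

lemma cmp_zr: assumes "g \<in> Hom C Y Z" "X \<in> Obj C" shows "cmp C g (zer C X Y) = zer C X Z"
proof -
  have Y: "Y \<in> Obj C" using assms hom_obj by blast
  have h: "cmp C g (zer C X Y) \<in> Hom C X Z" using cmp_hom[OF zer_hom[OF assms(2) Y] assms(1)] .
  have "add C (cmp C g (zer C X Y)) (cmp C g (zer C X Y)) = cmp C g (zer C X Y)"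
    using distl[OF zer_hom[OF assms(2) Y] zer_hom[OF assms(2) Y] assms(1)] zz[OF assms(2) Y] by simp
  thus ?thesis using idem_zero[OF h] by simp
qed

lemma neg_zer: assumes "X \<in> Obj C" "Y \<in> Obj C" shows "neg C (zer C X Y) = zer C X Y"
proof -
  have z: "zer C X Y \<in> Hom C X Y" using zer_hom assms .
  have A: "add C (neg C (zer C X Y)) (zer C X Y) = zer C X Y" using add_negl[OF z] .
  have B: "add C (neg C (zer C X Y)) (zer C X Y) = neg C (zer C X Y)" using add_zr[OF neg_hom[OF z]] .
  show ?thesis using trans[OF B[symmetric] A] .
qed

lemma neg_neg: assumes "f \<in> Hom C X Y" shows "neg C (neg C f) = f"
  using neg_unique[OF assms neg_hom[OF assms] add_negr[OF assms]] by simp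

lemma cmp_negl: assumes "f \<in> Hom C X Y" "g \<in> Hom C Y Z"
  shows "cmp C (neg C g) f = neg C (cmp C g f)"
proof -
  have "add C (cmp C (neg C g) f) (cmp C g f) = cmp C (add C (neg C g) g) f"
    using distr[OF assms(1) neg_hom[OF assms(2)] assms(2)] by simp
  also have "\<dots> = zer C X Z" using add_negl[OF assms(2)] cmp_zl[OF assms(1) hom_objR[OF assms(2)]] by simp
  finally show ?thesis using neg_unique[OF cmp_hom[OF assms(1) neg_hom[OF assms(2)]] cmp_hom[OF assms]] by simp
qed

lemma cmp_negr: assumes "f \<in> Hom C X Y" "g \<in> Hom C Y Z"
  shows "cmp C g (neg C f) = neg C (cmp C g f)"
proof -
  have "add C (cmp C g (neg C f)) (cmp C g f) = cmp C g (add C (neg C f) f)"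
    using distl[OF neg_hom[OF assms(1)] assms(1) assms(2)] by simp
  also have "\<dots> = zer C X Z" using add_negl[OF assms(1)] cmp_zr[OF assms(2) hom_objL[OF assms(1)]] by simp
  finally show ?thesis using neg_unique[OF cmp_hom[OF neg_hom[OF assms(1)] assms(2)] cmp_hom[OF assms]] by simp
qed

lemma shO_obj: "X \<in> Obj C \<Longrightarrow> shO C X \<in> Obj C"
  using shaut unfolding shift_autoequivalence_def by blast
lemma shM_hom: "f \<in> Hom C X Y \<Longrightarrow> shM C f \<in> Hom C (shO C X) (shO C Y)"
  using shaut unfolding shift_autoequivalence_def by blast
lemma shM_id: "X \<in> Obj C \<Longrightarrow> shM C (idm C X) = idm C (shO C X)"
  using shaut unfolding shift_autoequivalence_def by blast
lemma shM_cmp: "f \<in> Hom C X Y \<Longrightarrow> g \<in> Hom C Y Z \<Longrightarrow> shM C (cmp C g f) = cmp C (shM C g) (shM C f)"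
  using shaut unfolding shift_autoequivalence_def by blast
lemma shM_add: "f \<in> Hom C X Y \<Longrightarrow> f' \<in> Hom C X Y \<Longrightarrow> shM C (add C f f') = add C (shM C f) (shM C f')"
  using shaut unfolding shift_autoequivalence_def by blast
lemma shM_bij: "X \<in> Obj C \<Longrightarrow> Y \<in> Obj C \<Longrightarrow> bij_betw (shM C) (Hom C X Y) (Hom C (shO C X) (shO C Y))"
  using shaut unfolding shift_autoequivalence_def by blast

lemma shM_zer: assumes "X \<in> Obj C" "Y \<in> Obj C" shows "shM C (zer C X Y) = zer C (shO C X) (shO C Y)"
proof -
  have "add C (shM C (zer C X Y)) (shM C (zer C X Y)) = shM C (zer C X Y)"
    using shM_add[OF zer_hom[OF assms] zer_hom[OF assms]] zz[OF assms] by simp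
  thus ?thesis using idem_zero[OF shM_hom[OF zer_hom[OF assms]]] by simp
qed

lemma shM_neg: assumes "f \<in> Hom C X Y" shows "shM C (neg C f) = neg C (shM C f)"
proof -
  have "add C (shM C (neg C f)) (shM C f) = shM C (zer C X Y)"
    using shM_add[OF neg_hom[OF assms] assms] add_negl[OF assms] by simp
  also have "\<dots> = zer C (shO C X) (shO C Y)" using shM_zer[OF hom_objL[OF assms] hom_objR[OF assms]] .
  finally show ?thesis using neg_unique[OF shM_hom[OF neg_hom[OF assms]] shM_hom[OF assms]] by simp
qed

lemma tri_all: "(\<forall>T \<in> dist C. is_triangle C T) \<and>
     (\<forall>T T' a b c. T \<in> dist C \<longrightarrow> is_triangle C T' \<longrightarrow> tri_iso C T T' a b c \<longrightarrow> T' \<in> dist C) \<and>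
     (\<forall>X \<in> Obj C. \<forall>Z. is_zero_obj C Z \<longrightarrow>
        (X, X, Z, idm C X, zer C X Z, zer C Z (shO C X)) \<in> dist C) \<and>
     (\<forall>X Y f. f \<in> Hom C X Y \<longrightarrow> (\<exists>Z g h. (X, Y, Z, f, g, h) \<in> dist C)) \<and>
     (\<forall>X Y Z f g h. f \<in> Hom C X Y \<longrightarrow>
        ((X, Y, Z, f, g, h) \<in> dist C \<longleftrightarrow> (Y, Z, shO C X, g, h, neg C (shM C f)) \<in> dist C)) \<and>
     (\<forall>X Y Z f g h X' Y' Z' f' g' h' a b.
        (X, Y, Z, f, g, h) \<in> dist C \<longrightarrow> (X', Y', Z', f', g', h') \<in> dist C \<longrightarrow>
        a \<in> Hom C X X' \<longrightarrow> b \<in> Hom C Y Y' \<longrightarrow> cmp C b f = cmp C f' a \<longrightarrow>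
        (\<exists>c \<in> Hom C Z Z'. cmp C c g = cmp C g' b \<and> cmp C (shM C a) h = cmp C h' c))"
  using tri unfolding triangulated_def by (elim conjE) (intro conjI; assumption)

lemma dist_tri: "(X, Y, Z, f, g, h) \<in> dist C \<Longrightarrow> f \<in> Hom C X Y \<and> g \<in> Hom C Y Z \<and> h \<in> Hom C Z (shO C X)"
proof -
  assume a: "(X, Y, Z, f, g, h) \<in> dist C"
  have "\<forall>T \<in> dist C. is_triangle C T" using tri_all by (elim conjE)
  hence "is_triangle C (X, Y, Z, f, g, h)" using a by blast
  thus ?thesis unfolding is_triangle_def by simp
qed
lemma TR1iso: "T \<in> dist C \<Longrightarrow> is_triangle C T' \<Longrightarrow> tri_iso C T T' a b c \<Longrightarrow> T' \<in> dist C"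
proof -
  have "\<forall>T T' a b c. T \<in> dist C \<longrightarrow> is_triangle C T' \<longrightarrow> tri_iso C T T' a b c \<longrightarrow> T' \<in> dist C"
    using tri_all by (elim conjE)
  thus "T \<in> dist C \<Longrightarrow> is_triangle C T' \<Longrightarrow> tri_iso C T T' a b c \<Longrightarrow> T' \<in> dist C" by blast
qed
lemma TR1: "X \<in> Obj C \<Longrightarrow> is_zero_obj C Z \<Longrightarrow>
        (X, X, Z, idm C X, zer C X Z, zer C Z (shO C X)) \<in> dist C"
proof -
  have "\<forall>X \<in> Obj C. \<forall>Z. is_zero_obj C Z \<longrightarrow>
        (X, X, Z, idm C X, zer C X Z, zer C Z (shO C X)) \<in> dist C"
    using tri_all by (elim conjE)
  thus "X \<in> Obj C \<Longrightarrow> is_zero_obj C Z \<Longrightarrow>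
        (X, X, Z, idm C X, zer C X Z, zer C Z (shO C X)) \<in> dist C" by blast
qed
lemma TR1ex: "f \<in> Hom C X Y \<Longrightarrow> \<exists>Z g h. (X, Y, Z, f, g, h) \<in> dist C"
proof -
  have "\<forall>X Y f. f \<in> Hom C X Y \<longrightarrow> (\<exists>Z g h. (X, Y, Z, f, g, h) \<in> dist C)"
    using tri_all by (elim conjE)
  thus "f \<in> Hom C X Y \<Longrightarrow> \<exists>Z g h. (X, Y, Z, f, g, h) \<in> dist C" by blast
qed
lemma TR2: "f \<in> Hom C X Y \<Longrightarrow>
        ((X, Y, Z, f, g, h) \<in> dist C \<longleftrightarrow> (Y, Z, shO C X, g, h, neg C (shM C f)) \<in> dist C)"
proof -
  have "\<forall>X Y Z f g h. f \<in> Hom C X Y \<longrightarrow>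
        ((X, Y, Z, f, g, h) \<in> dist C \<longleftrightarrow> (Y, Z, shO C X, g, h, neg C (shM C f)) \<in> dist C)"
    using tri_all by (elim conjE)
  thus "f \<in> Hom C X Y \<Longrightarrow>
        ((X, Y, Z, f, g, h) \<in> dist C \<longleftrightarrow> (Y, Z, shO C X, g, h, neg C (shM C f)) \<in> dist C)" by blast
qed
lemma TR3: "(X, Y, Z, f, g, h) \<in> dist C \<Longrightarrow> (X', Y', Z', f', g', h') \<in> dist C \<Longrightarrow>
        a \<in> Hom C X X' \<Longrightarrow> b \<in> Hom C Y Y' \<Longrightarrow> cmp C b f = cmp C f' a \<Longrightarrow>
        (\<exists>c \<in> Hom C Z Z'. cmp C c g = cmp C g' b \<and> cmp C (shM C a) h = cmp C h' c)"
proof -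
  have "\<forall>X Y Z f g h X' Y' Z' f' g' h' a b.
        (X, Y, Z, f, g, h) \<in> dist C \<longrightarrow> (X', Y', Z', f', g', h') \<in> dist C \<longrightarrow>
        a \<in> Hom C X X' \<longrightarrow> b \<in> Hom C Y Y' \<longrightarrow> cmp C b f = cmp C f' a \<longrightarrow>
        (\<exists>c \<in> Hom C Z Z'. cmp C c g = cmp C g' b \<and> cmp C (shM C a) h = cmp C h' c)"
    using tri_all by (elim conjE)
  thus "(X, Y, Z, f, g, h) \<in> dist C \<Longrightarrow> (X', Y', Z', f', g', h') \<in> dist C \<Longrightarrow>
        a \<in> Hom C X X' \<Longrightarrow> b \<in> Hom C Y Y' \<Longrightarrow> cmp C b f = cmp C f' a \<Longrightarrow>
        (\<exists>c \<in> Hom C Z Z'. cmp C c g = cmp C g' b \<and> cmp C (shM C a) h = cmp C h' c)"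
    by blast
qed
lemma zero_ex: "\<exists>Z. is_zero_obj C Z" using additive unfolding additive_def by blast

end


context TC begin

lemma zobj: assumes "is_zero_obj C Z0" shows "Z0 \<in> Obj C"
  using assms unfolding is_zero_obj_def by blast

lemma zobj_id: assumes "is_zero_obj C Z0" shows "idm C Z0 = zer C Z0 Z0"
  using assms id_hom[OF zobj[OF assms]] unfolding is_zero_obj_def by blast

lemma zobj_sh: assumes z: "is_zero_obj C Z0" shows "is_zero_obj C (shO C Z0)"
proof -
  have O: "Z0 \<in> Obj C" using zobj[OF z] .
  have O1: "shO C Z0 \<in> Obj C" using shO_obj[OF O] .
  have I: "idm C (shO C Z0) = zer C (shO C Z0) (shO C Z0)"
    using shM_id[OF O] zobj_id[OF z] shM_zer[OF O O] by simp
  show ?thesis unfolding is_zero_obj_def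
  proof (intro conjI ballI allI impI)
    show "shO C Z0 \<in> Obj C" using O1 .
  next
    fix X f assume X: "X \<in> Obj C" and f: "f \<in> Hom C (shO C Z0) X"
    have "f = cmp C f (idm C (shO C Z0))" using id_right[OF f] by simp
    also have "\<dots> = zer C (shO C Z0) X" using I cmp_zr[OF f O1] by simp
    finally show "f = zer C (shO C Z0) X" .
  next
    fix X f assume X: "X \<in> Obj C" and f: "f \<in> Hom C X (shO C Z0)"
    have "f = cmp C (idm C (shO C Z0)) f" using id_left[OF f] by simp
    also have "\<dots> = zer C X (shO C Z0)" using I cmp_zl[OF f O1] by simp
    finally show "f = zer C X (shO C Z0)" .
  qed
qed

lemma comp_zero: assumes d: "(X, Y, Z, f, g, h) \<in> dist C" shows "cmp C g f = zer C X Z"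
proof -
  obtain Z0 where z: "is_zero_obj C Z0" using zero_ex by blast
  have f: "f \<in> Hom C X Y" and g: "g \<in> Hom C Y Z" using dist_tri[OF d] by auto
  have X: "X \<in> Obj C" using hom_objL[OF f] .
  have t: "(X, X, Z0, idm C X, zer C X Z0, zer C Z0 (shO C X)) \<in> dist C" using TR1[OF X z] .
  obtain c where c: "c \<in> Hom C Z0 Z" "cmp C c (zer C X Z0) = cmp C g f"
    using TR3[OF t d id_hom[OF X] f refl] by blast
  show ?thesis using c cmp_zr[OF c(1) X] by simp
qed

lemma triv: assumes z: "is_zero_obj C Z0" and W: "W \<in> Obj C"
  shows "(Z0, W, W, zer C Z0 W, idm C W, zer C W (shO C Z0)) \<in> dist C"
proof -
  have O: "Z0 \<in> Obj C" using zobj[OF z] .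
  have zh: "zer C Z0 W \<in> Hom C Z0 W" using zer_hom[OF O W] .
  have e: "neg C (shM C (zer C Z0 W)) = zer C (shO C Z0) (shO C W)"
    using shM_zer[OF O W] neg_zer[OF shO_obj[OF O] shO_obj[OF W]] by simp
  have "(W, W, shO C Z0, idm C W, zer C W (shO C Z0), zer C (shO C Z0) (shO C W)) \<in> dist C"
    using TR1[OF W zobj_sh[OF z]] .
  thus ?thesis using TR2[OF zh, of W "idm C W" "zer C W (shO C Z0)"] e by simp
qed

lemma factor: assumes d: "(X, Y, Z, f, g, h) \<in> dist C" and t: "t \<in> Hom C Z W"
  and tg: "cmp C t g = zer C Y W"
  shows "\<exists>\<phi> \<in> Hom C (shO C X) W. t = cmp C \<phi> h"
proof -
  obtain Z0 where z: "is_zero_obj C Z0" using zero_ex by blast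
  have O: "Z0 \<in> Obj C" using zobj[OF z] .
  have f: "f \<in> Hom C X Y" and g: "g \<in> Hom C Y Z" using dist_tri[OF d] by auto
  have W: "W \<in> Obj C" using hom_objR[OF t] .
  have Y: "Y \<in> Obj C" using hom_objL[OF g] .
  have r: "(Y, Z, shO C X, g, h, neg C (shM C f)) \<in> dist C" using TR2[OF f] d by blast
  have sq: "cmp C t g = cmp C (zer C Z0 W) (zer C Y Z0)" using tg cmp_zr[OF zer_hom[OF O W] Y] by simp
  obtain \<phi> where \<phi>: "\<phi> \<in> Hom C (shO C X) W" "cmp C \<phi> h = cmp C (idm C W) t"
    using TR3[OF r triv[OF z W] zer_hom[OF Y O] t sq] by blast
  show ?thesis using \<phi> id_left[OF t] by auto
qed

lemma inv_nil: assumes u: "u \<in> Hom C Z Z" and e: "e \<in> Hom C Z Z"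
  and ue: "add C u e = idm C Z" and ee: "cmp C e e = zer C Z Z"
  shows "\<exists>u' \<in> Hom C Z Z. cmp C u u' = idm C Z \<and> cmp C u' u = idm C Z"
proof -
  have Z: "Z \<in> Obj C" using hom_objL[OF u] .
  have I: "idm C Z \<in> Hom C Z Z" using id_hom[OF Z] .
  have "add C (cmp C e u) (cmp C e e) = cmp C e (add C u e)" using distl[OF u e e] by simp
  also have "\<dots> = e" using ue id_right[OF e] by simp
  finally have eu: "cmp C e u = e" using ee add_zr[OF cmp_hom[OF u e]] by simp
  have "add C (cmp C u e) (cmp C e e) = cmp C (add C u e) e" using distr[OF e u e] by simp
  also have "\<dots> = e" using ue id_left[OF e] by simp
  finally have ue2: "cmp C u e = e" using ee add_zr[OF cmp_hom[OF e u]] by simp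
  have 1: "cmp C u (add C (idm C Z) e) = idm C Z"
    using distl[OF I e u] id_right[OF u] ue2 ue by simp
  have 2: "cmp C (add C (idm C Z) e) u = idm C Z"
    using distr[OF u I e] id_left[OF u] eu ue by simp
  show ?thesis using 1 2 add_hom[OF I e] by blast
qed

lemma inv_tri: assumes d: "(X, Y, Z, f, g, h) \<in> dist C" and u: "u \<in> Hom C Z Z"
  and ug: "cmp C u g = g" and hu: "cmp C h u = h"
  shows "\<exists>u' \<in> Hom C Z Z. cmp C u u' = idm C Z \<and> cmp C u' u = idm C Z"
proof -
  have f: "f \<in> Hom C X Y" and g: "g \<in> Hom C Y Z" and h: "h \<in> Hom C Z (shO C X)"
    using dist_tri[OF d] by auto
  have Z: "Z \<in> Obj C" using hom_objL[OF u] .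
  have I: "idm C Z \<in> Hom C Z Z" using id_hom[OF Z] .
  define e where "e = add C (idm C Z) (neg C u)"
  have e: "e \<in> Hom C Z Z" unfolding e_def using add_hom[OF I neg_hom[OF u]] .
  have "add C u e = add C u (add C (neg C u) (idm C Z))"
    unfolding e_def using add_comm[OF I neg_hom[OF u]] by simp
  also have "\<dots> = add C (add C u (neg C u)) (idm C Z)" using add_assoc[OF u neg_hom[OF u] I] by simp
  also have "\<dots> = idm C Z" using add_negr[OF u] add_zl[OF I] by simp
  finally have ue: "add C u e = idm C Z" .
  have "cmp C e g = add C (cmp C (idm C Z) g) (cmp C (neg C u) g)"
    unfolding e_def using distr[OF g I neg_hom[OF u]] .
  also have "\<dots> = add C g (neg C g)" using id_left[OF g] cmp_negl[OF g u] ug by simp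
  also have "\<dots> = zer C Y Z" using add_negr[OF g] .
  finally have eg: "cmp C e g = zer C Y Z" .
  obtain \<phi> where \<phi>: "\<phi> \<in> Hom C (shO C X) Z" "e = cmp C \<phi> h" using factor[OF d e eg] by blast
  have "cmp C h e = add C (cmp C h (idm C Z)) (cmp C h (neg C u))"
    unfolding e_def using distl[OF I neg_hom[OF u] h] .
  also have "\<dots> = add C h (neg C h)" using id_right[OF h] cmp_negr[OF u h] hu by simp
  also have "\<dots> = zer C Z (shO C X)" using add_negr[OF h] .
  finally have he: "cmp C h e = zer C Z (shO C X)" .
  have "cmp C e e = cmp C \<phi> (cmp C h e)" using assoc[OF e h \<phi>(1)] \<phi>(2) by simp
  also have "\<dots> = zer C Z Z" using he cmp_zr[OF \<phi>(1) Z] by simp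
  finally have ee: "cmp C e e = zer C Z Z" .
  show ?thesis using inv_nil[OF u e ue ee] .
qed

end


context TC begin

lemma shOn_obj: "X \<in> Obj C \<Longrightarrow> (shO C ^^ n) X \<in> Obj C"
  by (induction n) (auto intro: shO_obj)

lemma shMn_hom: "f \<in> Hom C X Y \<Longrightarrow> (shM C ^^ n) f \<in> Hom C ((shO C ^^ n) X) ((shO C ^^ n) Y)"
  by (induction n) (auto intro: shM_hom)

lemma shMn_id: "X \<in> Obj C \<Longrightarrow> (shM C ^^ n) (idm C X) = idm C ((shO C ^^ n) X)"
  by (induction n) (auto simp: shM_id shOn_obj)

lemma shMn_cmp: "f \<in> Hom C X Y \<Longrightarrow> g \<in> Hom C Y Z \<Longrightarrow>
   (shM C ^^ n) (cmp C g f) = cmp C ((shM C ^^ n) g) ((shM C ^^ n) f)"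
proof (induction n)
  case 0 then show ?case by simp
next
  case (Suc n)
  then show ?case using shM_cmp[OF shMn_hom[OF Suc.prems(1)] shMn_hom[OF Suc.prems(2)]] by simp
qed

lemma shMn_surj: "X \<in> Obj C \<Longrightarrow> Y \<in> Obj C \<Longrightarrow> e \<in> Hom C ((shO C ^^ n) X) ((shO C ^^ n) Y) \<Longrightarrow>
   \<exists>e0 \<in> Hom C X Y. (shM C ^^ n) e0 = e"
proof (induction n arbitrary: e)
  case 0 then show ?case by simp
next
  case (Suc n)
  have "e \<in> shM C ` Hom C ((shO C ^^ n) X) ((shO C ^^ n) Y)"
    using Suc.prems shM_bij[OF shOn_obj[OF Suc.prems(1)] shOn_obj[OF Suc.prems(2)], of n n]
    unfolding bij_betw_def by simp
  then obtain e1 where e1: "e1 \<in> Hom C ((shO C ^^ n) X) ((shO C ^^ n) Y)" "e = shM C e1" by blast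
  obtain e0 where "e0 \<in> Hom C X Y" "(shM C ^^ n) e0 = e1" using Suc.IH[OF Suc.prems(1,2) e1(1)] by blast
  then show ?case using e1 by auto
qed

lemma shMn_inj: "e0 \<in> Hom C X Y \<Longrightarrow> e1 \<in> Hom C X Y \<Longrightarrow> (shM C ^^ n) e0 = (shM C ^^ n) e1 \<Longrightarrow> e0 = e1"
proof (induction n)
  case 0 then show ?case by simp
next
  case (Suc n)
  have X: "X \<in> Obj C" "Y \<in> Obj C" using hom_obj[OF Suc.prems(1)] by auto
  have "inj_on (shM C) (Hom C ((shO C ^^ n) X) ((shO C ^^ n) Y))"
    using shM_bij[OF shOn_obj[OF X(1)] shOn_obj[OF X(2)], of n n] unfolding bij_betw_def by simp
  then have "(shM C ^^ n) e0 = (shM C ^^ n) e1"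
    using Suc.prems shMn_hom[OF Suc.prems(1), of n] shMn_hom[OF Suc.prems(2), of n]
    unfolding inj_on_def by simp
  then show ?case using Suc.IH Suc.prems by blast
qed

lemma wshift_retract:
  assumes K: "karoubian C" and SO: "S \<subseteq> Obj C"
    and Sr: "\<forall>X \<in> S. \<forall>Y \<in> Obj C. retract C Y X \<longrightarrow> Y \<in> S"
    and X: "X \<in> wshift C S i" and Y: "Y \<in> Obj C" and r: "retract C Y X"
  shows "Y \<in> wshift C S i"
proof -
  obtain Z k l where Z: "Z \<in> S" and kl: "int l - int k = i"
     and iZ: "isomorphic C ((shO C ^^ k) X) ((shO C ^^ l) Z)"
    using X unfolding wshift_def by blast
  obtain \<phi> \<phi>' where \<phi>: "\<phi> \<in> Hom C ((shO C ^^ k) X) ((shO C ^^ l) Z)"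
    and \<phi>': "\<phi>' \<in> Hom C ((shO C ^^ l) Z) ((shO C ^^ k) X)"
    and \<phi>1: "cmp C \<phi>' \<phi> = idm C ((shO C ^^ k) X)"
    and \<phi>2: "cmp C \<phi> \<phi>' = idm C ((shO C ^^ l) Z)"
    using iZ unfolding isomorphic_def iso_def by blast
  obtain s r where s: "s \<in> Hom C Y X" and r: "r \<in> Hom C X Y" and rs: "cmp C r s = idm C Y"
    using r unfolding retract_def by blast
  have ZO: "Z \<in> Obj C" using Z SO by blast
  define sk where "sk = (shM C ^^ k) s"
  define rk where "rk = (shM C ^^ k) r"
  have sk: "sk \<in> Hom C ((shO C ^^ k) Y) ((shO C ^^ k) X)" unfolding sk_def using shMn_hom[OF s] .
  have rk: "rk \<in> Hom C ((shO C ^^ k) X) ((shO C ^^ k) Y)" unfolding rk_def using shMn_hom[OF r] .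
  have rsk: "cmp C rk sk = idm C ((shO C ^^ k) Y)"
    unfolding rk_def sk_def using shMn_cmp[OF s r, of k] rs shMn_id[OF Y] by simp
  define s' where "s' = cmp C \<phi> sk"
  define r' where "r' = cmp C rk \<phi>'"
  have s': "s' \<in> Hom C ((shO C ^^ k) Y) ((shO C ^^ l) Z)" unfolding s'_def using cmp_hom[OF sk \<phi>] .
  have r': "r' \<in> Hom C ((shO C ^^ l) Z) ((shO C ^^ k) Y)" unfolding r'_def using cmp_hom[OF \<phi>' rk] .
  have "cmp C r' s' = cmp C rk (cmp C \<phi>' (cmp C \<phi> sk))"
    unfolding r'_def s'_def using assoc[OF cmp_hom[OF sk \<phi>] \<phi>' rk] by simp
  also have "\<dots> = cmp C rk sk" using assoc[OF sk \<phi> \<phi>'] \<phi>1 id_left[OF sk] by simp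
  finally have rs': "cmp C r' s' = idm C ((shO C ^^ k) Y)" using rsk by simp
  define e where "e = cmp C s' r'"
  have e: "e \<in> Hom C ((shO C ^^ l) Z) ((shO C ^^ l) Z)" unfolding e_def using cmp_hom[OF r' s'] .
  have "cmp C e e = cmp C s' (cmp C r' (cmp C s' r'))"
    unfolding e_def using assoc[OF cmp_hom[OF r' s'] r' s'] by simp
  also have "\<dots> = cmp C s' (cmp C (cmp C r' s') r')" using assoc[OF r' s' r'] by simp
  also have "\<dots> = e" unfolding e_def using rs' id_left[OF r'] by simp
  finally have ee: "cmp C e e = e" .
  obtain e0 where e0: "e0 \<in> Hom C Z Z" and e0e: "(shM C ^^ l) e0 = e"
    using shMn_surj[OF ZO ZO e] by blast
  have "(shM C ^^ l) (cmp C e0 e0) = (shM C ^^ l) e0" using shMn_cmp[OF e0 e0] e0e ee by simp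
  hence e0i: "cmp C e0 e0 = e0" using shMn_inj[OF cmp_hom[OF e0 e0] e0] by blast
  obtain W r0 s0 where r0: "r0 \<in> Hom C Z W" and s0: "s0 \<in> Hom C W Z"
      and rs0: "cmp C r0 s0 = idm C W" and sr0: "cmp C s0 r0 = e0"
    using K ZO e0 e0i unfolding karoubian_def by blast
  have WO: "W \<in> Obj C" using hom_objR[OF r0] .
  have WS: "W \<in> S" using Sr Z WO r0 s0 rs0 unfolding retract_def by blast
  define rl where "rl = (shM C ^^ l) r0"
  define sl where "sl = (shM C ^^ l) s0"
  have rl: "rl \<in> Hom C ((shO C ^^ l) Z) ((shO C ^^ l) W)" unfolding rl_def using shMn_hom[OF r0] .
  have sl: "sl \<in> Hom C ((shO C ^^ l) W) ((shO C ^^ l) Z)" unfolding sl_def using shMn_hom[OF s0] .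
  have slrl: "cmp C sl rl = e" unfolding sl_def rl_def using shMn_cmp[OF r0 s0, of l] sr0 e0e by simp
  have rlsl: "cmp C rl sl = idm C ((shO C ^^ l) W)"
    unfolding sl_def rl_def using shMn_cmp[OF s0 r0, of l] rs0 shMn_id[OF WO] by simp
  define a where "a = cmp C rl s'"
  define b where "b = cmp C r' sl"
  have a: "a \<in> Hom C ((shO C ^^ k) Y) ((shO C ^^ l) W)" unfolding a_def using cmp_hom[OF s' rl] .
  have b: "b \<in> Hom C ((shO C ^^ l) W) ((shO C ^^ k) Y)" unfolding b_def using cmp_hom[OF sl r'] .
  have "cmp C b a = cmp C r' (cmp C sl (cmp C rl s'))"
    unfolding a_def b_def using assoc[OF cmp_hom[OF s' rl] sl r'] by simp
  also have "\<dots> = cmp C r' (cmp C (cmp C sl rl) s')" using assoc[OF s' rl sl] by simp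
  also have "\<dots> = cmp C r' (cmp C s' (cmp C r' s'))" using slrl assoc[OF s' r' s'] e_def by simp
  also have "\<dots> = cmp C r' s'" using rs' id_right[OF s'] by simp
  finally have ba: "cmp C b a = idm C ((shO C ^^ k) Y)" using rs' by simp
  have "cmp C a b = cmp C rl (cmp C s' (cmp C r' sl))"
    unfolding a_def b_def using assoc[OF cmp_hom[OF sl r'] s' rl] by simp
  also have "\<dots> = cmp C rl (cmp C (cmp C s' r') sl)" using assoc[OF sl r' s'] by simp
  also have "\<dots> = cmp C rl (cmp C sl (cmp C rl sl))" using slrl e_def assoc[OF sl rl sl] by simp
  also have "\<dots> = cmp C rl sl" using rlsl id_right[OF sl] by simp
  finally have ab: "cmp C a b = idm C ((shO C ^^ l) W)" using rlsl by simp
  have "isomorphic C ((shO C ^^ k) Y) ((shO C ^^ l) W)"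
    unfolding isomorphic_def iso_def using a b ab ba by blast
  thus ?thesis unfolding wshift_def using Y WS kl by blast
qed

lemma wshift_sh: assumes "shO C X \<in> wshift C S (i + 1)" and X: "X \<in> Obj C"
  shows "X \<in> wshift C S i"
proof -
  obtain Y k l where Y: "Y \<in> S" "int l - int k = i + 1"
    "isomorphic C ((shO C ^^ k) (shO C X)) ((shO C ^^ l) Y)"
    using assms(1) unfolding wshift_def by blast
  have "(shO C ^^ k) (shO C X) = (shO C ^^ Suc k) X" by (simp add: funpow_swap1)
  hence "isomorphic C ((shO C ^^ Suc k) X) ((shO C ^^ l) Y)" using Y(3) by simp
  moreover have "int l - int (Suc k) = i" using Y(2) by simp
  ultimately show ?thesis unfolding wshift_def using X Y(1) by blast
qed

end


context TC begin

lemma main_core: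
  fixes Le Ge :: "'o set" and M A B M1 M0 :: 'o and m :: int
    and c g k h i1 p1 i0 p0 :: 'm
  assumes T: "(A, M, B, c, g, k) \<in> dist C"
    and h: "h \<in> Hom C A A" and ch: "cmp C c h = c"
    and bp: "biproduct C A M1 M0 i1 p1 i0 p0" and hdef: "cmp C i1 p1 = h"
  shows "\<exists>M2 c1 g1 k1 S e2 q2 e0 q0 d \<beta>' \<alpha> \<gamma>' \<delta>.
       (M1, M, M2, c1, g1, k1) \<in> dist C \<and>
       biproduct C S M2 (shO C M0) e2 q2 e0 q0 \<and>
       \<beta>' \<in> Hom C M2 B \<and> \<alpha> \<in> Hom C B M2 \<and> cmp C \<alpha> \<beta>' = idm C M2 \<and>
       \<gamma>' \<in> Hom C (shO C M0) B \<and> \<delta> \<in> Hom C B (shO C M0) \<and> cmp C \<delta> \<gamma>' = idm C (shO C M0) \<and>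
       tri_iso C (A, M, B, c, g, k)
         (A, M, S, cmp C c1 p1, cmp C e2 g1,
          add C (cmp C (shM C i1) (cmp C k1 q2)) (cmp C (shM C i0) q0)) (idm C A) (idm C M) d"
proof -
  have c: "c \<in> Hom C A M" and g: "g \<in> Hom C M B" and k: "k \<in> Hom C B (shO C A)"
    using dist_tri[OF T] by auto
  have i1: "i1 \<in> Hom C M1 A" and p1: "p1 \<in> Hom C A M1" and i0: "i0 \<in> Hom C M0 A"
    and p0: "p0 \<in> Hom C A M0" and p1i1: "cmp C p1 i1 = idm C M1" and p0i0: "cmp C p0 i0 = idm C M0"
    and p0i1: "cmp C p0 i1 = zer C M1 M0" and p1i0: "cmp C p1 i0 = zer C M0 M1"
    and sumA: "add C (cmp C i1 p1) (cmp C i0 p0) = idm C A"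
    using bp unfolding biproduct_def by auto
  have AO: "A \<in> Obj C" and MO: "M \<in> Obj C" and BO: "B \<in> Obj C" and M1O: "M1 \<in> Obj C"
    and M0O: "M0 \<in> Obj C"
    using hom_obj[OF c] hom_obj[OF g] hom_obj[OF i1] hom_obj[OF i0] by auto
  have M0sO: "shO C M0 \<in> Obj C" using shO_obj[OF M0O] .
  have M1sO: "shO C M1 \<in> Obj C" using shO_obj[OF M1O] .
  have AsO: "shO C A \<in> Obj C" using shO_obj[OF AO] .
  have I1: "shM C i1 \<in> Hom C (shO C M1) (shO C A)" using shM_hom[OF i1] .
  have I0: "shM C i0 \<in> Hom C (shO C M0) (shO C A)" using shM_hom[OF i0] .
  have P1: "shM C p1 \<in> Hom C (shO C A) (shO C M1)" using shM_hom[OF p1] .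
  have P0: "shM C p0 \<in> Hom C (shO C A) (shO C M0)" using shM_hom[OF p0] .
  have P1I1: "cmp C (shM C p1) (shM C i1) = idm C (shO C M1)"
    using shM_cmp[OF i1 p1] p1i1 shM_id[OF M1O] by simp
  have P0I0: "cmp C (shM C p0) (shM C i0) = idm C (shO C M0)"
    using shM_cmp[OF i0 p0] p0i0 shM_id[OF M0O] by simp
  have P0I1: "cmp C (shM C p0) (shM C i1) = zer C (shO C M1) (shO C M0)"
    using shM_cmp[OF i1 p0] p0i1 shM_zer[OF M1O M0O] by simp
  have P1I0: "cmp C (shM C p1) (shM C i0) = zer C (shO C M0) (shO C M1)"
    using shM_cmp[OF i0 p1] p1i0 shM_zer[OF M0O M1O] by simp
  have sumAs: "add C (cmp C (shM C i1) (shM C p1)) (cmp C (shM C i0) (shM C p0)) = idm C (shO C A)"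
    using shM_add[OF cmp_hom[OF p1 i1] cmp_hom[OF p0 i0]] shM_cmp[OF p1 i1] shM_cmp[OF p0 i0]
      sumA shM_id[OF AO] by simp
  define c1 where "c1 = cmp C c i1"
  have c1: "c1 \<in> Hom C M1 M" unfolding c1_def using cmp_hom[OF i1 c] .
  have c1p1: "cmp C c1 p1 = c" unfolding c1_def using assoc[OF p1 i1 c] hdef ch by simp
  have ci0: "cmp C c i0 = zer C M0 M"
  proof -
    have "cmp C c i0 = cmp C (cmp C c1 p1) i0" using c1p1 by simp
    also have "\<dots> = cmp C c1 (cmp C p1 i0)" using assoc[OF i0 p1 c1] by simp
    also have "\<dots> = zer C M0 M" using p1i0 cmp_zr[OF c1 M0O] by simp
    finally show ?thesis .
  qed
  obtain M2 g1 k1 where T1: "(M1, M, M2, c1, g1, k1) \<in> dist C" using TR1ex[OF c1] by blast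
  have g1: "g1 \<in> Hom C M M2" and k1: "k1 \<in> Hom C M2 (shO C M1)" using dist_tri[OF T1] by auto
  have M2O: "M2 \<in> Obj C" using hom_objR[OF g1] .
  have IM: "idm C M \<in> Hom C M M" using id_hom[OF MO] .
  obtain \<alpha> where \<alpha>: "\<alpha> \<in> Hom C B M2" and \<alpha>g: "cmp C \<alpha> g = cmp C g1 (idm C M)"
      and k1\<alpha>: "cmp C (shM C p1) k = cmp C k1 \<alpha>"
    using TR3[OF T T1 p1 IM] id_left[OF c] c1p1 by auto
  have \<alpha>g': "cmp C \<alpha> g = g1" using \<alpha>g id_right[OF g1] by simp
  obtain \<beta> where \<beta>: "\<beta> \<in> Hom C M2 B" and \<beta>g1: "cmp C \<beta> g1 = cmp C g (idm C M)"
      and k\<beta>: "cmp C (shM C i1) k1 = cmp C k \<beta>"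
    using TR3[OF T1 T i1 IM] id_left[OF c1] c1_def by auto
  have \<beta>g1': "cmp C \<beta> g1 = g" using \<beta>g1 id_right[OF g] by simp
  obtain Z0 where z: "is_zero_obj C Z0" using zero_ex by blast
  have Z0O: "Z0 \<in> Obj C" using zobj[OF z] .
  have T0: "(M0, Z0, shO C M0, zer C M0 Z0, zer C Z0 (shO C M0), neg C (shM C (idm C M0))) \<in> dist C"
    using TR1[OF M0O z] TR2[OF id_hom[OF M0O]] by blast
  have sq0: "cmp C (zer C Z0 M) (zer C M0 Z0) = cmp C c (neg C i0)"
    using cmp_zr[OF zer_hom[OF Z0O MO] M0O] cmp_negr[OF i0 c] ci0 neg_zer[OF M0O MO] by simp
  obtain \<gamma> where \<gamma>: "\<gamma> \<in> Hom C (shO C M0) B"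
      and k\<gamma>0: "cmp C (shM C (neg C i0)) (neg C (shM C (idm C M0))) = cmp C k \<gamma>"
    using TR3[OF T0 T neg_hom[OF i0] zer_hom[OF Z0O MO] sq0] by blast
  have IM0s: "idm C (shO C M0) \<in> Hom C (shO C M0) (shO C M0)" using id_hom[OF M0sO] .
  have k\<gamma>: "cmp C k \<gamma> = shM C i0"
  proof -
    have "cmp C (shM C (neg C i0)) (neg C (shM C (idm C M0)))
        = cmp C (neg C (shM C i0)) (neg C (idm C (shO C M0)))"
      using shM_neg[OF i0] shM_id[OF M0O] by simp
    also have "\<dots> = neg C (cmp C (shM C i0) (neg C (idm C (shO C M0))))"
      using cmp_negl[OF neg_hom[OF IM0s] I0] .
    also have "\<dots> = neg C (neg C (cmp C (shM C i0) (idm C (shO C M0))))"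
      using cmp_negr[OF IM0s I0] by simp
    also have "\<dots> = shM C i0" using neg_neg[OF cmp_hom[OF IM0s I0]] id_right[OF I0] by simp
    finally show ?thesis using k\<gamma>0 by simp
  qed
  have Tr: "(M, B, shO C A, g, k, neg C (shM C c)) \<in> dist C" using TR2[OF c] T by blast
  have kg: "cmp C k g = zer C M (shO C A)" using comp_zero[OF Tr] .
  define u where "u = cmp C \<alpha> \<beta>"
  have u: "u \<in> Hom C M2 M2" unfolding u_def using cmp_hom[OF \<beta> \<alpha>] .
  have ug1: "cmp C u g1 = g1" unfolding u_def using assoc[OF g1 \<beta> \<alpha>] \<beta>g1' \<alpha>g' by simp
  have k1u: "cmp C k1 u = k1"
  proof -
    have "cmp C k1 u = cmp C (cmp C k1 \<alpha>) \<beta>" unfolding u_def using assoc[OF \<beta> \<alpha> k1] .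
    also have "\<dots> = cmp C (shM C p1) (cmp C k \<beta>)" using k1\<alpha> assoc[OF \<beta> k P1] by simp
    also have "\<dots> = cmp C (cmp C (shM C p1) (shM C i1)) k1" using k\<beta> assoc[OF k1 I1 P1] by simp
    also have "\<dots> = k1" using P1I1 id_left[OF k1] by simp
    finally show ?thesis .
  qed
  obtain w where w: "w \<in> Hom C M2 M2" and uw: "cmp C u w = idm C M2" and wu: "cmp C w u = idm C M2"
    using inv_tri[OF T1 u ug1 k1u] by blast
  have wg1: "cmp C w g1 = g1"
  proof -
    have "cmp C w g1 = cmp C w (cmp C u g1)" using ug1 by simp
    also have "\<dots> = cmp C (cmp C w u) g1" using assoc[OF g1 u w] .
    finally show ?thesis using wu id_left[OF g1] by simp
  qed
  have k1w: "cmp C k1 w = k1"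
  proof -
    have "cmp C k1 w = cmp C (cmp C k1 u) w" using k1u by simp
    also have "\<dots> = cmp C k1 (cmp C u w)" using assoc[OF w u k1] by simp
    finally show ?thesis using uw id_right[OF k1] by simp
  qed
  define \<beta>' where "\<beta>' = cmp C \<beta> w"
  have \<beta>': "\<beta>' \<in> Hom C M2 B" unfolding \<beta>'_def using cmp_hom[OF w \<beta>] .
  have \<alpha>\<beta>': "cmp C \<alpha> \<beta>' = idm C M2" unfolding \<beta>'_def using assoc[OF w \<beta> \<alpha>] u_def uw by simp
  have \<beta>'g1: "cmp C \<beta>' g1 = g" unfolding \<beta>'_def using assoc[OF g1 w \<beta>] wg1 \<beta>g1' by simp
  have k\<beta>': "cmp C k \<beta>' = cmp C (shM C i1) k1"
  proof -
    have "cmp C k \<beta>' = cmp C (cmp C k \<beta>) w" unfolding \<beta>'_def using assoc[OF w \<beta> k] .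
    also have "\<dots> = cmp C (shM C i1) (cmp C k1 w)" using k\<beta> assoc[OF w k1 I1] by simp
    finally show ?thesis using k1w by simp
  qed
  have \<alpha>\<gamma>: "cmp C \<alpha> \<gamma> \<in> Hom C (shO C M0) M2" using cmp_hom[OF \<gamma> \<alpha>] .
  define \<gamma>' where "\<gamma>' = add C \<gamma> (neg C (cmp C \<beta>' (cmp C \<alpha> \<gamma>)))"
  have b\<alpha>\<gamma>: "cmp C \<beta>' (cmp C \<alpha> \<gamma>) \<in> Hom C (shO C M0) B" using cmp_hom[OF \<alpha>\<gamma> \<beta>'] .
  have \<gamma>': "\<gamma>' \<in> Hom C (shO C M0) B" unfolding \<gamma>'_def using add_hom[OF \<gamma> neg_hom[OF b\<alpha>\<gamma>]] .
  have \<alpha>\<gamma>': "cmp C \<alpha> \<gamma>' = zer C (shO C M0) M2"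
  proof -
    have "cmp C \<alpha> \<gamma>' = add C (cmp C \<alpha> \<gamma>) (cmp C \<alpha> (neg C (cmp C \<beta>' (cmp C \<alpha> \<gamma>))))"
      unfolding \<gamma>'_def using distl[OF \<gamma> neg_hom[OF b\<alpha>\<gamma>] \<alpha>] .
    also have "\<dots> = add C (cmp C \<alpha> \<gamma>) (neg C (cmp C (cmp C \<alpha> \<beta>') (cmp C \<alpha> \<gamma>)))"
      using cmp_negr[OF b\<alpha>\<gamma> \<alpha>] assoc[OF \<alpha>\<gamma> \<beta>' \<alpha>] by simp
    also have "\<dots> = zer C (shO C M0) M2" using \<alpha>\<beta>' id_left[OF \<alpha>\<gamma>] add_negr[OF \<alpha>\<gamma>] by simp
    finally show ?thesis .
  qed
  have k1\<alpha>\<gamma>: "cmp C k1 (cmp C \<alpha> \<gamma>) = zer C (shO C M0) (shO C M1)"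
  proof -
    have "cmp C k1 (cmp C \<alpha> \<gamma>) = cmp C (cmp C k1 \<alpha>) \<gamma>" using assoc[OF \<gamma> \<alpha> k1] .
    also have "\<dots> = cmp C (shM C p1) (cmp C k \<gamma>)" using k1\<alpha> assoc[OF \<gamma> k P1] by simp
    finally show ?thesis using k\<gamma> P1I0 by simp
  qed
  have k\<gamma>': "cmp C k \<gamma>' = shM C i0"
  proof -
    have "cmp C k \<gamma>' = add C (cmp C k \<gamma>) (cmp C k (neg C (cmp C \<beta>' (cmp C \<alpha> \<gamma>))))"
      unfolding \<gamma>'_def using distl[OF \<gamma> neg_hom[OF b\<alpha>\<gamma>] k] .
    also have "\<dots> = add C (shM C i0) (neg C (cmp C (cmp C k \<beta>') (cmp C \<alpha> \<gamma>)))"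
      using k\<gamma> cmp_negr[OF b\<alpha>\<gamma> k] assoc[OF \<alpha>\<gamma> \<beta>' k] by simp
    also have "\<dots> = add C (shM C i0) (neg C (cmp C (shM C i1) (cmp C k1 (cmp C \<alpha> \<gamma>))))"
      using k\<beta>' assoc[OF \<alpha>\<gamma> k1 I1] by simp
    also have "\<dots> = shM C i0"
      using k1\<alpha>\<gamma> cmp_zr[OF I1 M0sO] neg_zer[OF M0sO AsO] add_zr[OF I0] by simp
    finally show ?thesis .
  qed
  define \<delta> where "\<delta> = cmp C (shM C p0) k"
  have \<delta>: "\<delta> \<in> Hom C B (shO C M0)" unfolding \<delta>_def using cmp_hom[OF k P0] .
  have \<delta>\<gamma>': "cmp C \<delta> \<gamma>' = idm C (shO C M0)"
    unfolding \<delta>_def using assoc[OF \<gamma>' k P0] k\<gamma>' P0I0 by simp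
  have \<delta>\<beta>': "cmp C \<delta> \<beta>' = zer C M2 (shO C M0)"
    unfolding \<delta>_def using assoc[OF \<beta>' k P0] k\<beta>' assoc[OF k1 I1 P0] P0I1
      cmp_zl[OF k1 M0sO] by simp
  have \<delta>g: "cmp C \<delta> g = zer C M (shO C M0)"
    unfolding \<delta>_def using assoc[OF g k P0] kg cmp_zr[OF P0 MO] by simp
  obtain S e2 q2 e0 q0 where bpS: "biproduct C S M2 (shO C M0) e2 q2 e0 q0"
    using additive M2O M0sO unfolding additive_def by blast
  have e2: "e2 \<in> Hom C M2 S" and q2: "q2 \<in> Hom C S M2" and e0: "e0 \<in> Hom C (shO C M0) S"
    and q0: "q0 \<in> Hom C S (shO C M0)" and q2e2: "cmp C q2 e2 = idm C M2"
    and q0e0: "cmp C q0 e0 = idm C (shO C M0)"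
    and q0e2: "cmp C q0 e2 = zer C M2 (shO C M0)" and q2e0: "cmp C q2 e0 = zer C (shO C M0) M2"
    and sumS: "add C (cmp C e2 q2) (cmp C e0 q0) = idm C S"
    using bpS unfolding biproduct_def by auto
  have SO: "S \<in> Obj C" using hom_objR[OF e2] .
  define d where "d = add C (cmp C e2 \<alpha>) (cmp C e0 \<delta>)"
  define d' where "d' = add C (cmp C \<beta>' q2) (cmp C \<gamma>' q0)"
  have d: "d \<in> Hom C B S" unfolding d_def using add_hom[OF cmp_hom[OF \<alpha> e2] cmp_hom[OF \<delta> e0]] .
  have d': "d' \<in> Hom C S B" unfolding d'_def using add_hom[OF cmp_hom[OF q2 \<beta>'] cmp_hom[OF q0 \<gamma>']] .
  have \<alpha>d': "cmp C \<alpha> d' = q2"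
  proof -
    have "cmp C \<alpha> d' = add C (cmp C \<alpha> (cmp C \<beta>' q2)) (cmp C \<alpha> (cmp C \<gamma>' q0))"
      unfolding d'_def using distl[OF cmp_hom[OF q2 \<beta>'] cmp_hom[OF q0 \<gamma>'] \<alpha>] .
    also have "\<dots> = add C (cmp C (cmp C \<alpha> \<beta>') q2) (cmp C (cmp C \<alpha> \<gamma>') q0)"
      using assoc[OF q2 \<beta>' \<alpha>] assoc[OF q0 \<gamma>' \<alpha>] by simp
    also have "\<dots> = add C q2 (zer C S M2)" using \<alpha>\<beta>' \<alpha>\<gamma>' id_left[OF q2] cmp_zl[OF q0 M2O] by simp
    finally show ?thesis using add_zr[OF q2] by simp
  qed
  have \<delta>d': "cmp C \<delta> d' = q0"
  proof -
    have "cmp C \<delta> d' = add C (cmp C \<delta> (cmp C \<beta>' q2)) (cmp C \<delta> (cmp C \<gamma>' q0))"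
      unfolding d'_def using distl[OF cmp_hom[OF q2 \<beta>'] cmp_hom[OF q0 \<gamma>'] \<delta>] .
    also have "\<dots> = add C (cmp C (cmp C \<delta> \<beta>') q2) (cmp C (cmp C \<delta> \<gamma>') q0)"
      using assoc[OF q2 \<beta>' \<delta>] assoc[OF q0 \<gamma>' \<delta>] by simp
    also have "\<dots> = add C (zer C S (shO C M0)) q0" using \<delta>\<beta>' \<delta>\<gamma>' id_left[OF q0] cmp_zl[OF q2 M0sO] by simp
    finally show ?thesis using add_zl[OF q0] by simp
  qed
  have dd': "cmp C d d' = idm C S"
  proof -
    have "cmp C d d' = add C (cmp C (cmp C e2 \<alpha>) d') (cmp C (cmp C e0 \<delta>) d')"
      unfolding d_def using distr[OF d' cmp_hom[OF \<alpha> e2] cmp_hom[OF \<delta> e0]] .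
    also have "\<dots> = add C (cmp C e2 (cmp C \<alpha> d')) (cmp C e0 (cmp C \<delta> d'))"
      using assoc[OF d' \<alpha> e2] assoc[OF d' \<delta> e0] by simp
    finally show ?thesis using \<alpha>d' \<delta>d' sumS by simp
  qed
  have d'e2: "cmp C d' e2 = \<beta>'"
  proof -
    have "cmp C d' e2 = add C (cmp C (cmp C \<beta>' q2) e2) (cmp C (cmp C \<gamma>' q0) e2)"
      unfolding d'_def using distr[OF e2 cmp_hom[OF q2 \<beta>'] cmp_hom[OF q0 \<gamma>']] .
    also have "\<dots> = add C (cmp C \<beta>' (cmp C q2 e2)) (cmp C \<gamma>' (cmp C q0 e2))"
      using assoc[OF e2 q2 \<beta>'] assoc[OF e2 q0 \<gamma>'] by simp
    also have "\<dots> = add C \<beta>' (zer C M2 B)" using q2e2 q0e2 id_right[OF \<beta>'] cmp_zr[OF \<gamma>' M2O] by simp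
    finally show ?thesis using add_zr[OF \<beta>'] by simp
  qed
  have dg: "cmp C d g = cmp C e2 g1"
  proof -
    have "cmp C d g = add C (cmp C (cmp C e2 \<alpha>) g) (cmp C (cmp C e0 \<delta>) g)"
      unfolding d_def using distr[OF g cmp_hom[OF \<alpha> e2] cmp_hom[OF \<delta> e0]] .
    also have "\<dots> = add C (cmp C e2 (cmp C \<alpha> g)) (cmp C e0 (cmp C \<delta> g))"
      using assoc[OF g \<alpha> e2] assoc[OF g \<delta> e0] by simp
    also have "\<dots> = add C (cmp C e2 g1) (zer C M S)" using \<alpha>g' \<delta>g cmp_zr[OF e0 MO] by simp
    finally show ?thesis using add_zr[OF cmp_hom[OF g1 e2]] by simp
  qed
  define K' where "K' = add C (cmp C (shM C i1) (cmp C k1 q2)) (cmp C (shM C i0) q0)"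
  have Ka: "cmp C (shM C i1) (cmp C k1 q2) \<in> Hom C S (shO C A)" using cmp_hom[OF cmp_hom[OF q2 k1] I1] .
  have Kb: "cmp C (shM C i0) q0 \<in> Hom C S (shO C A)" using cmp_hom[OF q0 I0] .
  have K': "K' \<in> Hom C S (shO C A)" unfolding K'_def using add_hom[OF Ka Kb] .
  have K'e2: "cmp C K' e2 = cmp C (shM C i1) k1"
  proof -
    have "cmp C K' e2 = add C (cmp C (cmp C (shM C i1) (cmp C k1 q2)) e2) (cmp C (cmp C (shM C i0) q0) e2)"
      unfolding K'_def using distr[OF e2 Ka Kb] .
    also have "\<dots> = add C (cmp C (shM C i1) (cmp C k1 (cmp C q2 e2))) (cmp C (shM C i0) (cmp C q0 e2))"
      using assoc[OF e2 cmp_hom[OF q2 k1] I1] assoc[OF e2 q2 k1] assoc[OF e2 q0 I0] by simp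
    also have "\<dots> = add C (cmp C (shM C i1) k1) (zer C M2 (shO C A))"
      using q2e2 q0e2 id_right[OF k1] cmp_zr[OF I0 M2O] by simp
    finally show ?thesis using add_zr[OF cmp_hom[OF k1 I1]] by simp
  qed
  have K'e0: "cmp C K' e0 = shM C i0"
  proof -
    have "cmp C K' e0 = add C (cmp C (cmp C (shM C i1) (cmp C k1 q2)) e0) (cmp C (cmp C (shM C i0) q0) e0)"
      unfolding K'_def using distr[OF e0 Ka Kb] .
    also have "\<dots> = add C (cmp C (shM C i1) (cmp C k1 (cmp C q2 e0))) (cmp C (shM C i0) (cmp C q0 e0))"
      using assoc[OF e0 cmp_hom[OF q2 k1] I1] assoc[OF e0 q2 k1] assoc[OF e0 q0 I0] by simp
    also have "\<dots> = add C (zer C (shO C M0) (shO C A)) (shM C i0)"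
      using q2e0 q0e0 id_right[OF I0] cmp_zr[OF k1 M0sO] cmp_zr[OF I1 M0sO] by simp
    finally show ?thesis using add_zl[OF I0] by simp
  qed
  have K'd: "cmp C K' d = k"
  proof -
    have "cmp C K' d = add C (cmp C K' (cmp C e2 \<alpha>)) (cmp C K' (cmp C e0 \<delta>))"
      unfolding d_def using distl[OF cmp_hom[OF \<alpha> e2] cmp_hom[OF \<delta> e0] K'] .
    also have "\<dots> = add C (cmp C (cmp C K' e2) \<alpha>) (cmp C (cmp C K' e0) \<delta>)"
      using assoc[OF \<alpha> e2 K'] assoc[OF \<delta> e0 K'] by simp
    also have "\<dots> = add C (cmp C (shM C i1) (cmp C k1 \<alpha>)) (cmp C (shM C i0) \<delta>)"
      using K'e2 K'e0 assoc[OF \<alpha> k1 I1] by simp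
    also have "\<dots> = add C (cmp C (cmp C (shM C i1) (shM C p1)) k) (cmp C (cmp C (shM C i0) (shM C p0)) k)"
      unfolding \<delta>_def using k1\<alpha>[symmetric] assoc[OF k P1 I1] assoc[OF k P0 I0] by simp
    also have "\<dots> = cmp C (idm C (shO C A)) k"
      using distr[OF k cmp_hom[OF P1 I1] cmp_hom[OF P0 I0]] sumAs by simp
    finally show ?thesis using id_left[OF k] by simp
  qed
  have kd': "cmp C k d' = K'"
  proof -
    have "cmp C k d' = add C (cmp C k (cmp C \<beta>' q2)) (cmp C k (cmp C \<gamma>' q0))"
      unfolding d'_def using distl[OF cmp_hom[OF q2 \<beta>'] cmp_hom[OF q0 \<gamma>'] k] .
    also have "\<dots> = add C (cmp C (cmp C k \<beta>') q2) (cmp C (cmp C k \<gamma>') q0)"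
      using assoc[OF q2 \<beta>' k] assoc[OF q0 \<gamma>' k] by simp
    finally show ?thesis unfolding K'_def using k\<beta>' k\<gamma>' assoc[OF q2 k1 I1] by simp
  qed
  define v where "v = cmp C d' d"
  have v: "v \<in> Hom C B B" unfolding v_def using cmp_hom[OF d d'] .
  have vg: "cmp C v g = g"
  proof -
    have "cmp C v g = cmp C d' (cmp C d g)" unfolding v_def using assoc[OF g d d'] by simp
    also have "\<dots> = cmp C (cmp C d' e2) g1" using dg assoc[OF g1 e2 d'] by simp
    finally show ?thesis using d'e2 \<beta>'g1 by simp
  qed
  have kv: "cmp C k v = k"
  proof -
    have "cmp C k v = cmp C (cmp C k d') d" unfolding v_def using assoc[OF d d' k] .
    thus ?thesis using kd' K'd by simp
  qed
  obtain v' where v': "v' \<in> Hom C B B" and vv': "cmp C v v' = idm C B" and v'v: "cmp C v' v = idm C B"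
    using inv_tri[OF T v vg kv] by blast
  have vv: "cmp C v v = v"
  proof -
    have "cmp C v v = cmp C d' (cmp C d (cmp C d' d))" unfolding v_def using assoc[OF cmp_hom[OF d d'] d d'] by simp
    also have "\<dots> = cmp C d' (cmp C (cmp C d d') d)" using assoc[OF d d' d] by simp
    finally show ?thesis unfolding v_def using dd' id_left[OF d] by simp
  qed
  have v1: "v = idm C B"
  proof -
    have "v = cmp C (cmp C v' v) v" using v'v id_left[OF v] by simp
    also have "\<dots> = cmp C v' (cmp C v v)" using assoc[OF v v v'] by simp
    finally show ?thesis using vv v'v by simp
  qed
  have d'd: "cmp C d' d = idm C B" using v1 v_def by simp
  have isod: "iso C B S d" unfolding iso_def using d d' d'd dd' by blast
  have isoA: "iso C A A (idm C A)" unfolding iso_def using id_hom[OF AO] id_left[OF id_hom[OF AO]] by blast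
  have isoM: "iso C M M (idm C M)" unfolding iso_def using IM id_left[OF IM] by blast
  have tm: "tri_morph C (A, M, B, c, g, k) (A, M, S, cmp C c1 p1, cmp C e2 g1, K') (idm C A) (idm C M) d"
    unfolding tri_morph_def using id_hom[OF AO] IM d id_left[OF c] id_right[OF c] c1p1 dg
      shM_id[OF AO] id_left[OF k] K'd id_right[OF cmp_hom[OF g1 e2]] by simp
  have ti: "tri_iso C (A, M, B, c, g, k) (A, M, S, cmp C c1 p1, cmp C e2 g1, K') (idm C A) (idm C M) d"
    unfolding tri_iso_def using tm isoA isoM isod by simp
  show ?thesis using T1 bpS \<beta>' \<alpha> \<alpha>\<beta>' \<gamma>' \<delta> \<delta>\<gamma>' ti unfolding K'_def by blast
qed
end



theorem proposition1p2p3: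
  fixes C :: "('o, 'm) tricat" and Le Ge :: "'o set" and M A B M1 M0 :: 'o and m :: int
    and c g k h j i1 p1 i0 p0 :: 'm
  assumes "triangulated C" and "karoubian C" and "weight_structure C Le Ge"
    and "M \<in> Obj C"
    and "(A, M, B, c, g, k) \<in> dist C"
    and "A \<in> w_le C Le m" and "B \<in> w_ge C Ge (m + 1)"
    and "h \<in> Hom C A A" and "j \<in> Hom C B B"
    and "tri_morph C (A, M, B, c, g, k) (A, M, B, c, g, k) h (idm C M) j"
    and "cmp C h h = h"
    and "biproduct C A M1 M0 i1 p1 i0 p0" and "cmp C i1 p1 = h"
  shows "M0 \<in> w_eq C Le Ge m \<and>
    (\<exists>M2 c1 g1 k1 S e2 q2 e0 q0 a b d.
       (M1, M, M2, c1, g1, k1) \<in> dist C \<and> M1 \<in> w_le C Le m \<and> M2 \<in> w_ge C Ge (m + 1) \<and>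
       biproduct C S M2 (shO C M0) e2 q2 e0 q0 \<and>
       tri_iso C (A, M, B, c, g, k)
         (A, M, S, cmp C c1 p1, cmp C e2 g1,
          add C (cmp C (shM C i1) (cmp C k1 q2)) (cmp C (shM C i0) q0)) a b d)"
proof -
  interpret TC C by (rule TC.intro) (rule assms(1))
  have c: "c \<in> Hom C A M" using dist_tri[OF assms(5)] by auto
  have "cmp C (idm C M) c = cmp C c h" using assms(10) unfolding tri_morph_def by simp
  hence ch: "cmp C c h = c" using id_left[OF c] by simp
  obtain M2 c1 g1 k1 S e2 q2 e0 q0 d \<beta>' \<alpha> \<gamma>' \<delta> where
    T1: "(M1, M, M2, c1, g1, k1) \<in> dist C" and bpS: "biproduct C S M2 (shO C M0) e2 q2 e0 q0"
    and \<beta>': "\<beta>' \<in> Hom C M2 B" and \<alpha>: "\<alpha> \<in> Hom C B M2" and \<alpha>\<beta>': "cmp C \<alpha> \<beta>' = idm C M2"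
    and \<gamma>': "\<gamma>' \<in> Hom C (shO C M0) B" and \<delta>: "\<delta> \<in> Hom C B (shO C M0)"
    and \<delta>\<gamma>': "cmp C \<delta> \<gamma>' = idm C (shO C M0)"
    and ti: "tri_iso C (A, M, B, c, g, k)
         (A, M, S, cmp C c1 p1, cmp C e2 g1,
          add C (cmp C (shM C i1) (cmp C k1 q2)) (cmp C (shM C i0) q0)) (idm C A) (idm C M) d"
    using main_core[OF assms(5) assms(8) ch assms(12) assms(13)] by blast
  have i1: "i1 \<in> Hom C M1 A" and p1: "p1 \<in> Hom C A M1" and i0: "i0 \<in> Hom C M0 A"
    and p0: "p0 \<in> Hom C A M0" and p1i1: "cmp C p1 i1 = idm C M1" and p0i0: "cmp C p0 i0 = idm C M0"
    using assms(12) unfolding biproduct_def by auto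
  have WS: "Le \<subseteq> Obj C" "Ge \<subseteq> Obj C"
     "\<forall>X \<in> Le. \<forall>Y \<in> Obj C. retract C Y X \<longrightarrow> Y \<in> Le"
     "\<forall>X \<in> Ge. \<forall>Y \<in> Obj C. retract C Y X \<longrightarrow> Y \<in> Ge"
    using assms(3) unfolding weight_structure_def by auto
  have M1O: "M1 \<in> Obj C" using hom_objL[OF i1] .
  have M0O: "M0 \<in> Obj C" using hom_objL[OF i0] .
  have M2O: "M2 \<in> Obj C" using hom_objL[OF \<beta>'] .
  have M0sO: "shO C M0 \<in> Obj C" using shO_obj[OF M0O] .
  have A: "A \<in> wshift C Le m" using assms(6) unfolding w_le_def .
  have B: "B \<in> wshift C Ge (m + 1)" using assms(7) unfolding w_ge_def .
  have r1: "retract C M1 A" unfolding retract_def using i1 p1 p1i1 by blast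
  have r0: "retract C M0 A" unfolding retract_def using i0 p0 p0i0 by blast
  have r2: "retract C M2 B" unfolding retract_def using \<beta>' \<alpha> \<alpha>\<beta>' by blast
  have r0s: "retract C (shO C M0) B" unfolding retract_def using \<gamma>' \<delta> \<delta>\<gamma>' by blast
  have M1w: "M1 \<in> w_le C Le m" unfolding w_le_def
    using wshift_retract[OF assms(2) WS(1) WS(3) A M1O r1] .
  have M0le: "M0 \<in> w_le C Le m" unfolding w_le_def
    using wshift_retract[OF assms(2) WS(1) WS(3) A M0O r0] .
  have M2w: "M2 \<in> w_ge C Ge (m + 1)" unfolding w_ge_def
    using wshift_retract[OF assms(2) WS(2) WS(4) B M2O r2] .
  have "shO C M0 \<in> wshift C Ge (m + 1)"
    using wshift_retract[OF assms(2) WS(2) WS(4) B M0sO r0s] .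
  hence M0ge: "M0 \<in> w_ge C Ge m" unfolding w_ge_def using wshift_sh M0O by blast
  have "M0 \<in> w_eq C Le Ge m" unfolding w_eq_def using M0le M0ge by blast
  thus ?thesis using T1 M1w M2w bpS ti by blast
qed


end
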